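(* Let $d\ge2$, $q\ge2$ and $1\le p\le q-1$ with $\gcd(p,q)=1$. For $k\ge1$ let $N_k$ be the number of $\sigma_d$-rotational sets $A\subset\mathbb{T}$ that are the union of exactly $k$ distinct $\sigma_d$-orbits and have rotation number $p/q$ (that is, $|A|=kq$ and, listing $A=\{u_0<\dots<u_{kq-1}\}$, $\sigma_d(u_j)=u_{j+kp}$ for all $j\in\mathbb{Z}/kq\mathbb{Z}$). Then $$N_1=\binom{d-2+q}{d-2},\qquad N_k=\binom{d-2+kq}{d-2}-\sum_{j=1}^{k-1}\binom{k-1}{j-1}N_j\quad\text{for }2\le k\le d-1.$$
   Context: $\mathbb{T}=\mathbb{R}/\mathbb{Z}$, ordered by representatives in $[0,1)$; $\sigma_d(t)=dt$. A finite set $\{u_0<\dots<u_{N-1}\}\subset\mathbb{T}$ (indices in $\mathbb{Z}/N\mathbb{Z}$) is $\sigma_d$-rotational if for some fixed $0\ne P\in\mathbb{Z}/N\mathbb{Z}$, $\sigma_d(u_j)=u_{j+P}$ for all $j$; its rotation number is $P/N$. *)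

theory Defs
  imports Complex_Main
begin

text \<open>The circle T = R/Z is represented by the interval [0,1) of representatives,
  ordered as reals.  The doubling-type map sigma_d(t) = d t mod 1.\<close>

definition sigma :: "nat \<Rightarrow> real \<Rightarrow> real" where
  "sigma d t = frac (real d * t)"

definition rotational_set :: "nat \<Rightarrow> nat \<Rightarrow> nat \<Rightarrow> real set \<Rightarrow> bool" where
  "rotational_set d N P A \<longleftrightarrow>
     A \<subseteq> {0..<1} \<and> finite A \<and> card A = N \<and>
     (\<forall>j<N. sigma d (sorted_list_of_set A ! j) = sorted_list_of_set A ! ((j + P) mod N))"

definition Nrot :: "nat \<Rightarrow> nat \<Rightarrow> nat \<Rightarrow> nat \<Rightarrow> nat" where
  "Nrot d p q k = card {A. rotational_set d (k * q) (k * p) A}"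

end

theory Submission
  imports Defs "HOL-Number_Theory.Cong"
begin


definition Zs :: "nat \<Rightarrow> nat \<Rightarrow> nat list set" where
  "Zs q a = {r. length r = q \<and> sum_list r = a}"
definition Gs :: "nat \<Rightarrow> nat \<Rightarrow> nat \<Rightarrow> nat list list set" where
  "Gs q k s = {R. length R = k \<and> (\<forall>r\<in>set R. length r = q) \<and> sum_list (map sum_list R) = s}"
definition Fs :: "nat \<Rightarrow> nat \<Rightarrow> nat \<Rightarrow> nat list list set" where
  "Fs q k s = {R. length R = k \<and> (\<forall>r\<in>set R. length r = q) \<and> sum_list (map sum_list R) = s
      \<and> (\<forall>r\<in>set R. 0 < sum_list r)}"

lemma member_le_sum_list: "x \<in> set (xs::nat list) \<Longrightarrow> x \<le> sum_list xs"
  by (induction xs) auto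

lemma finite_Zs: "finite (Zs q a)"
proof -
  have "Zs q a \<subseteq> {xs. set xs \<subseteq> {0..a} \<and> length xs = q}"
    unfolding Zs_def using member_le_sum_list by fastforce
  thus ?thesis using finite_lists_length_eq[of "{0..a}" q] finite_subset by blast
qed

lemma finite_Gs: "finite (Gs q k s)"
proof -
  let ?A = "{xs. set xs \<subseteq> {0..s} \<and> length xs = q}"
  have fA: "finite ?A" using finite_lists_length_eq by blast
  have "Gs q k s \<subseteq> {xs. set xs \<subseteq> ?A \<and> length xs = k}"
  proof
    fix R assume R: "R \<in> Gs q k s"
    have "set R \<subseteq> ?A"
    proof
      fix r assume r: "r \<in> set R"
      have "sum_list r \<le> s" using R r member_le_sum_list[of "sum_list r" "map sum_list R"]
        unfolding Gs_def by auto
      hence "set r \<subseteq> {0..s}" using member_le_sum_list[of _ r] by fastforce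
      thus "r \<in> ?A" using R r unfolding Gs_def by auto
    qed
    thus "R \<in> {xs. set xs \<subseteq> ?A \<and> length xs = k}" using R unfolding Gs_def by auto
  qed
  thus ?thesis using finite_lists_length_eq[OF fA, of k] finite_subset by blast
qed

lemma Fs_sub: "Fs q k s \<subseteq> Gs q k s" unfolding Fs_def Gs_def by auto
lemma finite_Fs: "finite (Fs q k s)" using finite_subset[OF Fs_sub finite_Gs] .

lemma Gs_Suc: "Gs q (Suc k) s = (\<Union>a\<in>{0..s}. (\<lambda>(r,R). r#R) ` (Zs q a \<times> Gs q k (s-a)))"
  unfolding Gs_def Zs_def by (auto simp: length_Suc_conv image_iff)

lemma Fs_Suc: "Fs q (Suc k) s = (\<Union>a\<in>{1..s}. (\<lambda>(r,R). r#R) ` (Zs q a \<times> Fs q k (s-a)))"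
  unfolding Fs_def Zs_def by (auto simp: length_Suc_conv image_iff Suc_le_eq)

lemma card_Gs_Suc: "card (Gs q (Suc k) s) = (\<Sum>a\<in>{0..s}. card (Zs q a) * card (Gs q k (s-a)))"
  unfolding Gs_Suc
  apply (subst card_UN_disjoint)
  apply (simp add: finite_Zs finite_Gs)
  apply (simp add: finite_Zs finite_Gs)
  apply (auto simp: Zs_def)[1]
  apply (rule sum.cong, simp)
  apply (subst card_image)
   apply (auto simp: inj_on_def card_cartesian_product)
  done

lemma card_Fs_Suc: "card (Fs q (Suc k) s) = (\<Sum>a\<in>{1..s}. card (Zs q a) * card (Fs q k (s-a)))"
  unfolding Fs_Suc
  apply (subst card_UN_disjoint)
  apply (simp add: finite_Zs finite_Fs)
  apply (simp add: finite_Zs finite_Fs)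
  apply (auto simp: Zs_def)[1]
  apply (rule sum.cong, simp)
  apply (subst card_image)
   apply (auto simp: inj_on_def card_cartesian_product)
  done

lemma Gs_0: "Gs q 0 s = Fs q 0 s" unfolding Gs_def Fs_def by auto

lemma card_Zs_0: "card (Zs q 0) = 1"
proof -
  have "Zs q 0 = {replicate q 0}" unfolding Zs_def
    by (auto simp: sum_list_eq_0_iff intro: replicate_eqI)
  thus ?thesis by simp
qed

lemma pascal_sum:
  fixes f :: "nat \<Rightarrow> nat"
  shows "(\<Sum>j\<le>Suc k. (Suc k choose j) * f j) = (\<Sum>j\<le>k. (k choose j) * f j) + (\<Sum>j\<le>k. (k choose j) * f (Suc j))"
proof -
  have a: "(\<Sum>j\<le>Suc k. (Suc k choose j) * f j) = f 0 + (\<Sum>j\<le>k. (Suc k choose Suc j) * f (Suc j))"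
    by (subst sum.atMost_Suc_shift) simp
  have b: "(\<Sum>j\<le>k. (k choose j) * f j) = f 0 + (\<Sum>j<k. (k choose Suc j) * f (Suc j))"
    by (cases k) (simp_all only: sum.atMost_Suc_shift lessThan_Suc_atMost, simp_all)
  have c: "(\<Sum>j<k. (k choose Suc j) * f (Suc j)) = (\<Sum>j\<le>k. (k choose Suc j) * f (Suc j))"
    by (simp add: lessThan_Suc_atMost[symmetric])
  show ?thesis unfolding a b c by (simp add: sum.distrib algebra_simps)
qed

lemma Gs_split: "card (Gs q k s) = (\<Sum>j\<le>k. (k choose j) * card (Fs q j s))"
proof (induction k arbitrary: s)
  case 0
  then show ?case by (simp add: Gs_0)
next
  case (Suc k)
  have "card (Gs q (Suc k) s) = (\<Sum>a\<in>{0..s}. card (Zs q a) * card (Gs q k (s-a)))"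
    by (rule card_Gs_Suc)
  also have "\<dots> = card (Gs q k s) + (\<Sum>a\<in>{1..s}. card (Zs q a) * card (Gs q k (s-a)))"
    by (simp add: sum.atLeast_Suc_atMost card_Zs_0)
  also have "(\<Sum>a\<in>{1..s}. card (Zs q a) * card (Gs q k (s-a)))
     = (\<Sum>a\<in>{1..s}. \<Sum>j\<le>k. (k choose j) * (card (Zs q a) * card (Fs q j (s-a))))"
    by (simp add: Suc.IH sum_distrib_left algebra_simps)
  also have "\<dots> = (\<Sum>j\<le>k. (k choose j) * (\<Sum>a\<in>{1..s}. card (Zs q a) * card (Fs q j (s-a))))"
    by (subst sum.swap) (simp add: sum_distrib_left)
  also have "\<dots> = (\<Sum>j\<le>k. (k choose j) * card (Fs q (Suc j) s))"
    by (simp add: card_Fs_Suc)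
  finally show ?case unfolding pascal_sum[of k "\<lambda>j. card (Fs q j s)"] Suc.IH .
qed

lemma concat_inj_aux:
  "length R = length R' \<Longrightarrow> (\<forall>r\<in>set R. length r = q) \<Longrightarrow> (\<forall>r\<in>set R'. length r = q)
    \<Longrightarrow> concat R = concat R' \<Longrightarrow> R = R'"
proof (induction R arbitrary: R')
  case Nil thus ?case by simp
next
  case (Cons r T)
  then obtain r' T' where R': "R' = r' # T'" by (cases R') auto
  with Cons.prems have "r = r' \<and> concat T = concat T'" by (simp add: append_eq_append_conv)
  with Cons R' show ?case by auto
qed

lemma concat_surj_aux:
  "length l = k * q \<Longrightarrow> \<exists>R. length R = k \<and> (\<forall>r\<in>set R. length r = q) \<and> concat R = l"
proof (induction k arbitrary: l)
  case 0 thus ?case by simp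
next
  case (Suc k)
  from Suc.prems have "length (drop q l) = k * q" by simp
  from Suc.IH[OF this] obtain R where R: "length R = k" "\<forall>r\<in>set R. length r = q" "concat R = drop q l"
    by blast
  show ?case
    by (rule exI[of _ "take q l # R"]) (use R Suc.prems in auto)
qed

lemma sum_list_concat_nat: "sum_list (concat (R :: nat list list)) = sum_list (map sum_list R)"
  by (induction R) auto

lemma len_concat_q: "\<forall>r\<in>set R. length r = q \<Longrightarrow> length (concat R) = length R * q"
  by (induction R) auto

lemma card_Gs: "card (Gs q k s) = (s + k * q - 1) choose s"
proof -
  have "bij_betw concat (Gs q k s) {l. length l = k * q \<and> sum_list l = s}"
    unfolding bij_betw_def
  proof
    show "inj_on concat (Gs q k s)" unfolding inj_on_def Gs_def
      using concat_inj_aux by (metis (mono_tags, lifting) mem_Collect_eq)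
    show "concat ` Gs q k s = {l. length l = k * q \<and> sum_list l = s}"
    proof
      show "concat ` Gs q k s \<subseteq> {l. length l = k * q \<and> sum_list l = s}"
        unfolding Gs_def by (auto simp: sum_list_concat_nat len_concat_q) 
      show "{l. length l = k * q \<and> sum_list l = s} \<subseteq> concat ` Gs q k s"
      proof
        fix l assume "l \<in> {l. length l = k * q \<and> sum_list l = s}"
        then obtain R where R: "length R = k" "\<forall>r\<in>set R. length r = q" "concat R = l" "sum_list l = s"
          using concat_surj_aux by blast
        thus "l \<in> concat ` Gs q k s" unfolding Gs_def
          by (auto simp: image_iff sum_list_concat_nat[symmetric] intro!: exI[of _ R])
      qed
    qed
  qed
  hence "card (Gs q k s) = card {l. length l = k * q \<and> sum_list l = s}" by (rule bij_betw_same_card)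
  thus ?thesis using card_length_sum_list[of "k*q" s] by simp
qed



locale RS =
  fixes d q p k :: nat
  assumes d2: "d \<ge> 2" and q2: "q \<ge> 2" and p1: "1 \<le> p" and pq: "p < q"
    and cop: "coprime p q" and k1: "1 \<le> k"
begin

abbreviation "n \<equiv> k * q"
abbreviation "P \<equiv> k * p"

lemma n2: "n \<ge> 2" using q2 k1 by (metis mult_le_mono nat_mult_1)
lemma n_pos: "0 < n" using k1 q2 by simp
lemma mod_n_lt[simp]: "x mod (k * q) < k * q" using n_pos by (rule mod_less_divisor)

lemma P_pos: "0 < P" using p1 k1 by simp
lemma P_lt: "P < n" using pq k1 by simp

definition per :: "(nat \<Rightarrow> 'a) \<Rightarrow> bool" where "per f \<longleftrightarrow> (\<forall>j. f (j + n) = f j)"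

lemma per_mult: "per f \<Longrightarrow> f (j + c * n) = f j"
proof (induction c)
  case 0 thus ?case by simp
next
  case (Suc c)
  have "f (j + Suc c * n) = f ((j + c * n) + n)" by (simp add: algebra_simps)
  also have "\<dots> = f (j + c * n)" using Suc.prems unfolding per_def by blast
  finally show ?case using Suc by simp
qed

lemma per_mod: "per f \<Longrightarrow> f j = f (j mod n)"
  using per_mult[of f "j mod n" "j div n"] by (metis mod_div_mult_eq)

lemma per_shift_sum:
  fixes f :: "nat \<Rightarrow> real"
  assumes "per f" shows "(\<Sum>j<n. f (j + c)) = (\<Sum>j<n. f j)"
proof (induction c)
  case 0 thus ?case by simp
next
  case (Suc c)
  have "(\<Sum>j<n. f (j + Suc c)) = (\<Sum>j<n. f (Suc j + c))" by simp
  also have "\<dots> = (\<Sum>j<Suc n. f (j + c)) - f c"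
    by (subst sum.lessThan_Suc_shift) simp
  also have "\<dots> = (\<Sum>j<n. f (j + c)) + f (n + c) - f c" by simp
  also have "f (n + c) = f c" using assms unfolding per_def by (metis add.commute)
  finally show ?case using Suc by simp
qed

definition Dr :: real where "Dr = real d ^ q - 1"
lemma Dr_pos: "Dr > 0"
proof -
  have "real d ^ q \<ge> 2 ^ q" using d2 by (simp add: power_mono)
  moreover have "(2::real) ^ q \<ge> 2 ^ 1" using q2 by (intro power_increasing) auto
  ultimately show ?thesis unfolding Dr_def by simp
qed

definition delta_of :: "(nat \<Rightarrow> real) \<Rightarrow> nat \<Rightarrow> real" where
  "delta_of m j = (\<Sum>i<q. real d ^ (q - 1 - i) * m (j + i * P)) / Dr"

lemma qP: "q * P = p * n" by simp

lemma recur_iter: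
  fixes D m :: "nat \<Rightarrow> real"
  assumes rec: "\<And>j. D (j + P) = real d * D j - m j"
  shows "real d ^ s * D j = D (j + s * P) + (\<Sum>i<s. real d ^ (s - 1 - i) * m (j + i * P))"
proof (induction s)
  case 0 thus ?case by simp
next
  case (Suc s)
  have "real d ^ Suc s * D j = real d * (D (j + s * P) + (\<Sum>i<s. real d ^ (s - 1 - i) * m (j + i * P)))"
    using Suc by simp
  also have "\<dots> = D (j + s * P + P) + m (j + s * P) + (\<Sum>i<s. real d * real d ^ (s - 1 - i) * m (j + i * P))"
    using rec[of "j + s*P"] by (simp add: sum_distrib_left algebra_simps)
  also have "(\<Sum>i<s. real d * real d ^ (s - 1 - i) * m (j + i * P)) = (\<Sum>i<s. real d ^ (Suc s - 1 - i) * m (j + i * P))"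
    by (rule sum.cong) (auto simp: Suc_diff_Suc power_Suc[symmetric])
  finally show ?case by (simp add: algebra_simps)
qed

lemma recur_unique:
  fixes D m :: "nat \<Rightarrow> real"
  assumes rec: "\<And>j. D (j + P) = real d * D j - m j" and pD: "per D"
  shows "D j = delta_of m j"
proof -
  have "real d ^ q * D j = D (j + q * P) + (\<Sum>i<q. real d ^ (q - 1 - i) * m (j + i * P))"
    by (rule recur_iter) (rule rec)
  also have "D (j + q * P) = D j" using per_mult[OF pD, of j p] qP by (simp add: mult.commute mult.left_commute)
  finally have "Dr * D j = (\<Sum>i<q. real d ^ (q - 1 - i) * m (j + i * P))"
    unfolding Dr_def by (simp add: algebra_simps)
  thus ?thesis unfolding delta_of_def using Dr_pos by (simp add: field_simps)
qed

lemma delta_of_per: "per m \<Longrightarrow> per (delta_of m)"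
  unfolding per_def delta_of_def
proof (intro allI)
  fix j assume "\<forall>j. m (j + n) = m j"
  hence "\<And>i. m (j + n + i * P) = m (j + i * P)" by (metis add.commute add.left_commute)
  thus "(\<Sum>i<q. real d ^ (q - 1 - i) * m (j + n + i * P)) / Dr = (\<Sum>i<q. real d ^ (q - 1 - i) * m (j + i * P)) / Dr"
    by simp
qed

lemma delta_of_rec:
  assumes pm: "per m"
  shows "delta_of m (j + P) = real d * delta_of m j - m j"
proof -
  define a where "a i = real d ^ (q - i) * m (j + i * P)" for i
  have s1: "(\<Sum>i<q. real d ^ (q - 1 - i) * m (j + P + i * P)) = (\<Sum>i<q. a (Suc i))"
    by (rule sum.cong) (auto simp: a_def algebra_simps)
  have s2: "real d * (\<Sum>i<q. real d ^ (q - 1 - i) * m (j + i * P)) = (\<Sum>i<q. a i)"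
    unfolding sum_distrib_left
    by (rule sum.cong) (auto simp: a_def power_Suc[symmetric] Suc_diff_Suc)
  have tel: "(\<Sum>i<q. a (Suc i)) - (\<Sum>i<q. a i) = a q - a 0"
    using sum_lessThan_telescope[of a q] by (simp add: sum_subtractf)
  have aq: "a q = m j" unfolding a_def using per_mult[OF pm, of j p] qP
    by (simp add: mult.commute mult.left_commute)
  have a0: "a 0 = real d ^ q * m j" unfolding a_def by simp
  have "Dr * delta_of m (j + P) = (\<Sum>i<q. a (Suc i))" unfolding delta_of_def s1 using Dr_pos by simp
  also have "\<dots> = (\<Sum>i<q. a i) + m j - real d ^ q * m j" using tel aq a0 by simp
  also have "(\<Sum>i<q. a i) = Dr * (real d * delta_of m j)" unfolding delta_of_def s2[symmetric] using Dr_pos by simp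
  finally have "Dr * delta_of m (j + P) = Dr * (real d * delta_of m j - m j)"
    unfolding Dr_def by (simp add: algebra_simps)
  thus ?thesis using Dr_pos by simp
qed

definition goodlift :: "(nat \<Rightarrow> real) \<Rightarrow> bool" where
  "goodlift L \<longleftrightarrow> (\<forall>j. L j < L (Suc j)) \<and> (\<forall>j. L (j + n) = L j + 1) \<and> 0 \<le> L 0 \<and> L 0 < 1
     \<and> (\<forall>j. real d * L j - L (j + P) \<in> \<int>)"

definition LA :: "real set \<Rightarrow> nat \<Rightarrow> nat \<Rightarrow> real" where
  "LA A i j = sorted_list_of_set A ! ((i + j) mod n) + real ((i + j) div n)"

definition j0 :: "(nat \<Rightarrow> real) \<Rightarrow> nat" where "j0 L = (LEAST j. 1 \<le> L j)"
definition AL :: "(nat \<Rightarrow> real) \<Rightarrow> real set" where "AL L = frac ` L ` {0..<n}"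
definition iL :: "(nat \<Rightarrow> real) \<Rightarrow> nat" where "iL L = n - j0 L"

context
  fixes L assumes gl: "goodlift L"
begin

lemma gl_mono: "strict_mono L"
  using gl unfolding goodlift_def by (simp add: strict_mono_Suc_iff)

lemma gl_less: "i < j \<Longrightarrow> L i < L j" using gl_mono by (simp add: strict_mono_less)
lemma gl_le: "i \<le> j \<Longrightarrow> L i \<le> L j" using gl_mono by (simp add: strict_mono_less_eq)

lemma gl_n: "L (j + n) = L j + 1" using gl unfolding goodlift_def by blast

lemma gl_mult: "L (j + c * n) = L j + real c"
proof (induction c)
  case 0 thus ?case by simp
next
  case (Suc c)
  have "L (j + Suc c * n) = L ((j + c * n) + n)" by (simp add: algebra_simps)
  also have "\<dots> = L (j + c * n) + 1" by (rule gl_n)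
  finally show ?case using Suc by simp
qed

lemma gl_0: "0 \<le> L 0" "L 0 < 1" using gl unfolding goodlift_def by auto
lemma gl_int: "real d * L j - L (j + P) \<in> \<int>" using gl unfolding goodlift_def by blast

lemma gl_nonneg: "0 \<le> L j" using gl_0 gl_le[of 0 j] by simp

lemma gl_lt2: "j < n \<Longrightarrow> L j < 2"
  using gl_less[of j n] gl_n[of 0] gl_0 by simp

lemma j0_ex: "1 \<le> L n" using gl_n[of 0] gl_0 by simp
lemma j0_ge: "1 \<le> L (j0 L)" unfolding j0_def using j0_ex by (rule LeastI)
lemma j0_le: "j0 L \<le> n" unfolding j0_def using j0_ex by (rule Least_le)
lemma j0_below: "j < j0 L \<Longrightarrow> L j < 1" unfolding j0_def using not_less_Least by force
lemma j0_pos: "0 < j0 L" using j0_ge gl_0 by (metis gr0I not_le)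

definition vv :: "nat \<Rightarrow> real" where "vv j = L (j0 L + j) - 1"

lemma vv_range: "j < n \<Longrightarrow> 0 \<le> vv j \<and> vv j < 1"
proof -
  assume j: "j < n"
  have "L (j0 L) \<le> L (j0 L + j)" by (rule gl_le) simp
  moreover have "L (j0 L + j) \<le> L (j0 L - 1 + n)" by (rule gl_le) (use j j0_pos in linarith)
  moreover have "L (j0 L - 1) < 1" by (rule j0_below) (use j0_pos in linarith)
  ultimately show ?thesis using j0_ge gl_n[of "j0 L - 1"] unfolding vv_def by linarith
qed

lemma vv_mono: "i < j \<Longrightarrow> vv i < vv j" unfolding vv_def using gl_less by simp


lemma AL_eq: "AL L = vv ` {0..<n}"
proof
  show "(AL L) \<subseteq> vv ` {0..<n}"
  proof
    fix x assume "x \<in> (AL L)"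
    then obtain j where j: "j < n" "x = frac (L j)" unfolding AL_def by auto
    show "x \<in> vv ` {0..<n}"
    proof (cases "j < j0 L")
      case True
      have "frac (L j) = L j" using j0_below[OF True] gl_nonneg by (simp add: frac_eq)
      also have "\<dots> = vv (j + n - j0 L)" unfolding vv_def using gl_n[of j] True j0_le by simp
      finally show ?thesis using j True by auto
    next
      case False
      have "L j \<ge> 1" using gl_le[of "j0 L" j] j0_ge False by simp
      hence "frac (L j) = L j - 1" using gl_lt2[OF j(1)]
        by (subst frac_unique_iff) (auto simp: Ints_def)
      also have "\<dots> = vv (j - j0 L)" unfolding vv_def using False by simp
      finally show ?thesis using j False by auto
    qed
  qed
  show "vv ` {0..<n} \<subseteq> (AL L)"
  proof
    fix x assume "x \<in> vv ` {0..<n}"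
    then obtain j where j: "j < n" "x = vv j" by auto
    show "x \<in> (AL L)"
    proof (cases "j0 L + j < n")
      case True
      have "L (j0 L + j) \<ge> 1" using gl_le[of "j0 L" "j0 L + j"] j0_ge by simp
      hence "frac (L (j0 L + j)) = vv j" using gl_lt2[OF True] unfolding vv_def
        by (subst frac_unique_iff) (auto simp: Ints_def)
      thus ?thesis unfolding AL_def using True j by force
    next
      case False
      define j' where "j' = j0 L + j - n"
      have j': "j' < j0 L" "j0 L + j = j' + n" unfolding j'_def using False j by auto
      have "vv j = L j'" unfolding vv_def j'(2) gl_n by simp
      hence "frac (L j') = vv j" using j0_below[OF j'(1)] gl_nonneg by (simp add: frac_eq)
      moreover have "j' < n" using j' j0_le by simp
      ultimately show ?thesis unfolding AL_def using j(2) by (auto intro!: image_eqI[of _ _ "L j'"])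
    qed
  qed
qed

lemma AL_sorted: "sorted_list_of_set (AL L) = map vv [0..<n]"
proof -
  have inj: "inj_on vv {0..<n}" by (rule inj_onI) (metis linorder_neqE_nat vv_mono less_irrefl)
  have cardA: "card (AL L) = n" unfolding AL_eq using card_image[OF inj] by simp
  have "sorted_wrt (<) (map vv [0..<n])"
    by (simp add: sorted_wrt_map) (rule sorted_wrt_mono_rel[OF _ sorted_wrt_upt], simp add: vv_mono)
  moreover have "set (map vv [0..<n]) = (AL L)" unfolding AL_eq by simp
  moreover have "length (map vv [0..<n]) = card (AL L)" using cardA by simp
  moreover have "finite (AL L)" unfolding AL_def by simp
  ultimately show ?thesis using sorted_list_of_set_unique[of "AL L" "map vv [0..<n]"] by blast
qed

lemma AL_card: "card (AL L) = n"
  using AL_sorted length_sorted_list_of_set[of "AL L"] by simp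

lemma AL_rot: "rotational_set d n P (AL L)"
  unfolding rotational_set_def
proof (intro conjI allI impI)
  show "(AL L) \<subseteq> {0..<1}" unfolding AL_eq using vv_range by auto
  show "finite (AL L)" unfolding AL_def by simp
  show "card (AL L) = n" by (rule AL_card)
  fix j assume j: "j < n"
  have jm: "(j + P) mod n < n" using n2 by simp
  show "sigma d (sorted_list_of_set (AL L) ! j) = sorted_list_of_set (AL L) ! ((j + P) mod n)"
    unfolding AL_sorted sigma_def using j jm
  proof (simp, subst frac_unique_iff, intro conjI)
    let ?c = "(j + P) div n"
    have e: "j0 L + j + P = (j0 L + (j + P) mod n) + ?c * n" by (metis add.assoc mod_div_mult_eq)
    have "L (j0 L + j + P) = L (j0 L + (j + P) mod n) + real ?c" unfolding e gl_mult ..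
    hence "real d * vv j - vv ((j + P) mod n) = (real d * L (j0 L + j) - L (j0 L + j + P)) + real ?c - real d + 1"
      unfolding vv_def by (simp add: algebra_simps)
    also have z: "real d * L (j0 L + j) - L (j0 L + j + P) \<in> \<int>" using gl_int[of "j0 L + j"] by (simp add: add.assoc)
    hence "(real d * L (j0 L + j) - L (j0 L + j + P)) + real ?c - real d + 1 \<in> \<int>"
      by (intro Ints_add[OF Ints_diff[OF Ints_add[OF z]]]) auto
    finally
    show "real d * vv j - vv ((j + P) mod n) \<in> \<int>" .
    show "0 \<le> vv ((j + P) mod n)" "vv ((j + P) mod n) < 1" using vv_range[OF jm] by auto
  qed
qed


lemma iL_lt: "iL L < n" unfolding iL_def using j0_pos j0_le by simp

lemma LA_AL: "LA (AL L) (iL L) j = L j"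
proof -
  let ?x = "(iL L) + j"
  have s: "?x mod n < n" using n2 by simp
  have "LA (AL L) (iL L) j = vv (?x mod n) + real (?x div n)" unfolding LA_def AL_sorted using s by simp
  also have "\<dots> = L (j0 L + ?x mod n + (?x div n) * n) - 1" unfolding vv_def gl_mult by simp
  also have "j0 L + ?x mod n + (?x div n) * n = j0 L + ?x" by (metis add.assoc mod_div_mult_eq)
  also have "j0 L + ?x = j + n" unfolding iL_def using j0_le by simp
  finally show ?thesis using gl_n by simp
qed

end

context
  fixes A i assumes rA: "rotational_set d n P A" and i: "i < n"
begin

abbreviation "u \<equiv> sorted_list_of_set A"

lemma rA_fin: "finite A" and rA_card: "card A = n" and rA_sub: "A \<subseteq> {0..<1}"
  using rA unfolding rotational_set_def by auto

lemma u_len: "length u = n" using rA_card by simp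

lemma u_range: "j < n \<Longrightarrow> 0 \<le> u ! j \<and> u ! j < 1"
  using rA_sub rA_fin u_len by (metis atLeastLessThan_iff nth_mem set_sorted_list_of_set subsetD)

lemma u_mono: "a < b \<Longrightarrow> b < n \<Longrightarrow> u ! a < u ! b"
  using strict_sorted_list_of_set[of A] u_len by (simp add: sorted_wrt_iff_nth_less)

lemma u_rot: "j < n \<Longrightarrow> frac (real d * u ! j) = u ! ((j + P) mod n)"
  using rA unfolding rotational_set_def sigma_def by blast

lemma LA_gl: "goodlift (LA A i)"
  unfolding goodlift_def
proof (intro conjI allI)
  fix j
  let ?x = "i + j"
  show "LA A i j < LA A i (Suc j)"
  proof (cases "Suc (?x mod n) = n")
    case True
    have m0: "Suc ?x mod n = 0" using True mod_Suc[of ?x n] by presburger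
    moreover have "Suc ?x div n = Suc (?x div n)" using m0 div_Suc[of ?x n] by simp
    moreover have "u ! (?x mod n) < 1" using u_range[of "?x mod n"] by simp
    moreover have "0 \<le> u ! 0" using u_range[of 0] n_pos by simp
    ultimately show ?thesis unfolding LA_def by (simp add: add_Suc_right)
  next
    case False
    have m1: "Suc ?x mod n = Suc (?x mod n)" using False mod_Suc[of ?x n] by presburger
    moreover have "Suc ?x div n = ?x div n" using m1 div_Suc[of ?x n] by simp
    moreover have "u ! (?x mod n) < u ! Suc (?x mod n)"
      using False mod_n_lt[of ?x] by (intro u_mono) linarith+
    ultimately show ?thesis unfolding LA_def by (simp add: add_Suc_right)
  qed
  show "LA A i (j + n) = LA A i j + 1"
  proof -
    have "(i + (j + n)) mod n = (i + j) mod n" by (simp add: add.assoc[symmetric])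
    moreover have "(i + (j + n)) div n = Suc ((i + j) div n)" using n_pos by (simp add: add.assoc[symmetric])
    ultimately show ?thesis unfolding LA_def by simp
  qed
  show "0 \<le> LA A i 0" "LA A i 0 < 1" unfolding LA_def using i u_range[OF i] by auto
  show "real d * LA A i j - LA A i (j + P) \<in> \<int>"
  proof -
    let ?a = "?x mod n"
    have r: "frac (real d * u ! ?a) = u ! ((?x + P) mod n)"
      using u_rot[of ?a] by (simp add: mod_add_left_eq)
    have z: "real d * u ! ?a - u ! ((?x + P) mod n) \<in> \<int>"
      using r by (metis frac_unique_iff)
    have "real d * LA A i j - LA A i (j + P) =
       (real d * u ! ?a - u ! ((?x + P) mod n)) + (real d * real (?x div n) - real ((?x + P) div n))"
      unfolding LA_def by (simp add: algebra_simps)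
    also have "\<dots> \<in> \<int>" by (rule Ints_add[OF z]) auto
    finally show ?thesis .
  qed
qed

lemma LA_AL': "AL (LA A i) = A"
proof -
  have f: "frac (LA A i j) = u ! ((i + j) mod n)" for j
    unfolding LA_def using u_range[of "(i+j) mod n"] by (subst frac_unique_iff) simp
  have "AL (LA A i) = (\<lambda>j. u ! ((i + j) mod n)) ` {0..<n}"
    unfolding AL_def image_image f ..
  also have "\<dots> = (\<lambda>j. u ! j) ` {0..<n}"
  proof
    show "(\<lambda>j. u ! ((i + j) mod n)) ` {0..<n} \<subseteq> (\<lambda>j. u ! j) ` {0..<n}" by auto
    show "(\<lambda>j. u ! j) ` {0..<n} \<subseteq> (\<lambda>j. u ! ((i + j) mod n)) ` {0..<n}"
    proof
      fix y assume "y \<in> (\<lambda>j. u ! j) ` {0..<n}"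
      then obtain x where x: "x < n" "y = u ! x" by auto
      have "(i + (x + n - i) mod n) mod n = x"
        using x i by (simp add: mod_add_right_eq)
      thus "y \<in> (\<lambda>j. u ! ((i + j) mod n)) ` {0..<n}"
        using x by (auto intro!: image_eqI[of _ _ "(x + n - i) mod n"])
    qed
  qed
  also have "\<dots> = set u" using u_len by (auto simp: in_set_conv_nth)
  also have "\<dots> = A" using rA_fin by simp
  finally show ?thesis .
qed

lemma LA_iL: "iL (LA A i) = i"
proof -
  have "j0 (LA A i) = n - i" unfolding j0_def
  proof (rule Least_equality)
    have "LA A i (n - i) = u ! 0 + 1" unfolding LA_def using i n_pos by simp
    thus "1 \<le> LA A i (n - i)" using u_range[of 0] n_pos by simp
    fix y assume y: "1 \<le> LA A i y"
    show "n - i \<le> y"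
    proof (rule ccontr)
      assume "\<not> n - i \<le> y"
      hence "i + y < n" by simp
      hence "LA A i y = u ! (i + y)" unfolding LA_def by simp
      thus False using y u_range[of "i + y"] \<open>i + y < n\<close> by simp
    qed
  qed
  thus ?thesis using i by (simp add: iL_def)
qed

end

lemma Ints_gt_m1: "(x::real) \<in> \<int> \<Longrightarrow> x > -1 \<Longrightarrow> x \<ge> 0"
  by (elim Ints_cases) simp

lemma Ints_nat: "(x::real) \<in> \<int> \<Longrightarrow> x \<ge> 0 \<Longrightarrow> x = real (nat \<lfloor>x\<rfloor>)"
  by (elim Ints_cases) simp

definition dl :: "(nat \<Rightarrow> real) \<Rightarrow> nat \<Rightarrow> real" where "dl L j = L (Suc j) - L j"
definition mreal :: "(nat \<Rightarrow> real) \<Rightarrow> nat \<Rightarrow> real" where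
  "mreal L j = real d * dl L j - dl L (j + P)"
definition tval :: "(nat \<Rightarrow> real) \<Rightarrow> real" where "tval L = real d * L 0 - L P"
definition mnat :: "(nat \<Rightarrow> real) \<Rightarrow> nat \<Rightarrow> nat" where "mnat L j = nat \<lfloor>mreal L j\<rfloor>"
definition rows_of :: "(nat \<Rightarrow> nat) \<Rightarrow> nat list list" where
  "rows_of f = map (\<lambda>r. map (\<lambda>l. f (r + k * l)) [0..<q]) [0..<k]"

lemma L_rep_gen: "L j = L 0 + (\<Sum>l<j. dl L l)"
  unfolding dl_def by (induction j) auto

context
  fixes L assumes gl: "goodlift L"
begin

lemma dl_pos: "0 < dl L j" unfolding dl_def using gl_less[OF gl, of j "Suc j"] by simp
lemma dl_lt1: "dl L j < 1"
proof -
  have "L (Suc j) < L (j + n)" using gl_less[OF gl, of "Suc j" "j + n"] n2 by simp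
  thus ?thesis unfolding dl_def gl_n[OF gl] by simp
qed
lemma dl_per: "per (dl L)" unfolding per_def dl_def
proof
  fix j
  have "L (Suc (j + n)) = L (Suc j) + 1" using gl_n[OF gl, of "Suc j"] by simp
  thus "L (Suc (j + n)) - L (j + n) = L (Suc j) - L j" using gl_n[OF gl, of j] by simp
qed

lemma mreal_int: "mreal L j \<in> \<int>"
proof -
  have "mreal L j = (real d * L (Suc j) - L (Suc j + P)) - (real d * L j - L (j + P))"
    unfolding mreal_def dl_def by (simp add: algebra_simps)
  also have "\<dots> \<in> \<int>" by (rule Ints_diff[OF gl_int[OF gl] gl_int[OF gl]])
  finally show ?thesis .
qed

lemma mreal_nonneg: "0 \<le> mreal L j"
proof (rule Ints_gt_m1[OF mreal_int])
  have "real d * dl L j > 0" using dl_pos d2 by simp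
  thus "mreal L j > -1" unfolding mreal_def using dl_lt1[of "j + P"] by simp
qed

lemma mreal_mnat: "mreal L j = real (mnat L j)"
  unfolding mnat_def using Ints_nat[OF mreal_int mreal_nonneg] .

lemma mreal_per: "per (mreal L)" unfolding per_def mreal_def
proof
  fix j
  have "dl L (j + n + P) = dl L ((j + P) + n)" by (simp add: algebra_simps)
  also have "\<dots> = dl L (j + P)" using dl_per unfolding per_def by blast
  finally show "real d * dl L (j + n) - dl L (j + n + P) = real d * dl L j - dl L (j + P)"
    using dl_per unfolding per_def by simp
qed

lemma dl_eq: "dl L j = delta_of (mreal L) j"
  by (rule recur_unique) (auto simp: mreal_def dl_per)

lemma sum_dl: "(\<Sum>j<n. dl L j) = 1"
  unfolding dl_def using sum_lessThan_telescope[of L n] gl_n[OF gl, of 0] by simp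

lemma sum_mreal: "(\<Sum>j<n. mreal L j) = real d - 1"
proof -
  have "(\<Sum>j<n. mreal L j) = real d * (\<Sum>j<n. dl L j) - (\<Sum>j<n. dl L (j + P))"
    unfolding mreal_def by (simp add: sum_subtractf sum_distrib_left)
  also have "(\<Sum>j<n. dl L (j + P)) = (\<Sum>j<n. dl L j)" by (rule per_shift_sum[OF dl_per])
  finally show ?thesis using sum_dl by simp
qed

lemma tval_int: "tval L \<in> \<int>" unfolding tval_def using gl_int[OF gl, of 0] by simp

lemma tval_range: "0 \<le> tval L \<and> tval L < real d - 1"
proof -
  have a: "L 0 < L P" using gl_less[OF gl] P_pos by blast
  have b: "L P < L 0 + 1" using gl_less[OF gl, of P n] P_lt gl_n[OF gl, of 0] by simp
  have c: "0 \<le> L 0" "L 0 < 1" using gl_0[OF gl] by auto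
  have "L 0 * 1 \<le> L 0 * real d" using c d2 by (intro mult_left_mono) auto
  hence "tval L > -1" unfolding tval_def using b by (simp add: algebra_simps)
  hence "tval L \<ge> 0" by (rule Ints_gt_m1[OF tval_int])
  moreover have "tval L < real d - 1"
  proof -
    have "(real d - 1) * L 0 < real d - 1" using c d2 by simp
    thus ?thesis unfolding tval_def using a by (simp add: algebra_simps)
  qed
  ultimately show ?thesis by simp
qed

lemma rows_pos: "r < k \<Longrightarrow> \<exists>l<q. 0 < mnat L (r + k * l)"
proof -
  assume r: "r < k"
  have "0 < delta_of (mreal L) r" using dl_pos dl_eq by simp
  hence "(\<Sum>i<q. real d ^ (q - 1 - i) * mreal L (r + i * P)) \<noteq> 0"
    unfolding delta_of_def by auto
  then obtain i where i: "i \<in> {..<q}" "real d ^ (q - 1 - i) * mreal L (r + i * P) \<noteq> 0"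
    using sum.not_neutral_contains_not_neutral by blast
  hence "mreal L (r + i * P) \<noteq> 0" by simp
  hence pos: "0 < mnat L (r + i * P)" using mreal_mnat[of "r + i * P"] by (simp add: gr0I)
  let ?x = "(r + i * P) mod n"
  have e: "r + i * P = r + k * (i * p)" by simp
  have "(r + i * P) mod k = r" unfolding e using r by simp
  hence xk: "?x mod k = r" by (simp add: mod_mod_cancel)
  have "?x = ?x mod k + k * (?x div k)" by simp
  hence "?x = r + k * (?x div k)" using xk by simp
  moreover have "?x div k < q" using mod_n_lt[of "r + i * P"]
    by (intro less_mult_imp_div_less) (simp add: mult.commute)
  moreover have "mnat L ?x = mnat L (r + i * P)"
    unfolding mnat_def using per_mod[OF mreal_per, of "r + i * P"] by simp
  ultimately show ?thesis using pos i(1) by (intro exI[of _ "?x div k"]) auto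
qed

end

lemma sum_split_add: "(\<Sum>j<m + c. f j) = (\<Sum>j<m. f j) + (\<Sum>r<c. f (m + r))" for f :: "nat \<Rightarrow> real"
  by (induction c) (auto simp: add_Suc_right)

lemma sum_double: "(\<Sum>j<k * qq. f j) = (\<Sum>r<k. \<Sum>l<qq. f (r + k * l))" for f :: "nat \<Rightarrow> real"
proof (induction qq)
  case 0 thus ?case by simp
next
  case (Suc qq)
  have "(\<Sum>j<k * Suc qq. f j) = (\<Sum>j<k * qq. f j) + (\<Sum>r<k. f (k * qq + r))"
    using sum_split_add[of f "k * qq" k] by (simp add: algebra_simps)
  thus ?case using Suc by (simp add: sum.distrib algebra_simps)
qed

lemma coprime_hit: "l < q \<Longrightarrow> \<exists>i<q. (c + i * p) mod q = l"
proof -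
  assume l: "l < q"
  let ?f = "\<lambda>i. (c + i * p) mod q"
  have inj: "inj_on ?f {0..<q}"
  proof (rule inj_onI)
    fix i i' assume ii: "i \<in> {0..<q}" "i' \<in> {0..<q}" "?f i = ?f i'"
    hence "[c + i * p = c + i' * p] (mod q)" by (simp add: cong_def)
    hence "[i * p = i' * p] (mod q)" by (simp add: cong_add_lcancel_nat)
    hence "[i = i'] (mod q)" using cop by (simp add: cong_mult_rcancel_nat)
    thus "i = i'" using ii by (simp add: cong_less_imp_eq_nat)
  qed
  have sub: "?f ` {0..<q} \<subseteq> {0..<q}"
  proof
    fix y assume "y \<in> ?f ` {0..<q}"
    then obtain i where "y = ?f i" by blast
    thus "y \<in> {0..<q}" using q2 by simp
  qed
  have "?f ` {0..<q} = {0..<q}" by (rule endo_inj_surj[OF _ sub inj]) simp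
  hence "l \<in> ?f ` {0..<q}" using l by simp
  then obtain i where "i \<in> {0..<q}" "l = ?f i" by blast
  thus ?thesis by auto
qed

definition mfun :: "nat list list \<Rightarrow> nat \<Rightarrow> real" where
  "mfun R j = real (R ! (j mod k) ! ((j mod n) div k))"
definition Sf :: "nat list list \<Rightarrow> nat \<Rightarrow> real" where
  "Sf R j = (\<Sum>l<j. delta_of (mfun R) l)"
definition Lf :: "nat list list \<Rightarrow> nat \<Rightarrow> nat \<Rightarrow> real" where
  "Lf R t j = (Sf R P + real t) / (real d - 1) + Sf R j"

lemma mfun_per: "per (mfun R)"
  unfolding per_def mfun_def by simp

lemma mod_n_split: "r < k \<Longrightarrow> (r + k * a) mod n = r + k * (a mod q)"
proof -
  assume r: "r < k"
  have "(r + k * a) mod n = (r + k * (a mod q) + k * q * (a div q)) mod n"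
    by (metis add.assoc mult.assoc distrib_left mod_mult_div_eq)
  also have "\<dots> = (r + k * (a mod q)) mod n" by simp
  also have "r + k * (a mod q) < n"
  proof -
    have "a mod q + 1 \<le> q" using q2 by (simp add: Suc_le_eq)
    hence "k * (a mod q + 1) \<le> k * q" by (rule mult_left_mono) simp
    thus ?thesis using r by (simp add: algebra_simps)
  qed
  hence "(r + k * (a mod q)) mod n = r + k * (a mod q)" by simp
  finally show ?thesis .
qed

lemma x0_aux: "real d - 1 \<noteq> 0 \<Longrightarrow> real d * (a / (real d - 1)) - a / (real d - 1) = (a::real)"
proof -
  assume h: "real d - 1 \<noteq> 0"
  have "real d * (a / (real d - 1)) - a / (real d - 1) = (real d - 1) * (a / (real d - 1))"
    by (simp only: left_diff_distrib mult_1)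
  also have "\<dots> = a" using h by simp
  finally show ?thesis .
qed

context
  fixes R t assumes RF: "R \<in> Fs q k (d - 1)" and tl: "t < d - 1"
begin

lemma R_len: "length R = k" and R_row: "r < k \<Longrightarrow> length (R ! r) = q"
  and R_sum: "sum_list (map sum_list R) = d - 1" and R_pos: "r < k \<Longrightarrow> 0 < sum_list (R ! r)"
  using RF unfolding Fs_def by auto

lemma mfun_at: "r < k \<Longrightarrow> l < q \<Longrightarrow> mfun R (r + k * l) = real (R ! r ! l)"
proof -
  assume r: "r < k" and l: "l < q"
  have "(r + k * l) mod n = r + k * l" using mod_n_split[OF r, of l] l by simp
  thus ?thesis unfolding mfun_def using r by simp
qed

lemma sum_mfun: "(\<Sum>j<n. mfun R j) = real d - 1"
proof -
  have "(\<Sum>j<n. mfun R j) = (\<Sum>r<k. \<Sum>l<q. real (R ! r ! l))"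
    unfolding sum_double by (rule sum.cong) (auto simp: mfun_at)
  also have "\<dots> = (\<Sum>r<k. real (sum_list (R ! r)))"
    by (rule sum.cong) (auto simp: sum_list_sum_nth R_row atLeast0LessThan)
  also have "\<dots> = real (sum_list (map sum_list R))"
    by (simp add: sum_list_sum_nth R_len atLeast0LessThan)
  finally show ?thesis using R_sum d2 by simp
qed

abbreviation "Dl \<equiv> delta_of (mfun R)"

lemma Dl_rec: "Dl (j + P) = real d * Dl j - mfun R j" by (rule delta_of_rec[OF mfun_per])
lemma Dl_per: "per Dl" by (rule delta_of_per[OF mfun_per])

lemma Dl_pos: "0 < Dl j"
proof -
  let ?r = "j mod k"
  have r: "?r < k" using k1 by simp
  have "0 < sum_list (R ! ?r)" by (rule R_pos[OF r])
  moreover have eq: "sum_list (R ! ?r) = sum ((!) (R ! ?r)) {..<q}"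
    using R_row[OF r] by (simp add: sum_list_sum_nth atLeast0LessThan)
  ultimately have "sum ((!) (R ! ?r)) {..<q} \<noteq> 0" by linarith
  then obtain l where l0: "l \<in> {..<q}" "R ! ?r ! l \<noteq> 0"
    using sum.not_neutral_contains_not_neutral by blast
  hence l: "l < q" "0 < R ! ?r ! l" by auto
  obtain i where i: "i < q" "(j div k + i * p) mod q = l" using coprime_hit[OF l(1)] by blast
  have e: "j + i * P = ?r + k * (j div k + i * p)" by (simp add: algebra_simps)
  have "(j + i * P) mod n = ?r + k * l" unfolding e mod_n_split[OF r] i(2) ..
  hence "mfun R (j + i * P) = real (R ! ?r ! l)"
    using mfun_at[OF r l(1)] per_mod[OF mfun_per[of R], of "j + i * P"] by simp
  hence pos: "0 < real d ^ (q - 1 - i) * mfun R (j + i * P)" using l d2 by simp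
  have "0 < (\<Sum>i<q. real d ^ (q - 1 - i) * mfun R (j + i * P))"
    by (rule sum_pos2[of _ i]) (use i pos in \<open>auto simp: mfun_def\<close>)
  thus ?thesis unfolding delta_of_def using Dr_pos by simp
qed

lemma sum_Dl: "(\<Sum>j<n. Dl j) = 1"
proof -
  have "(\<Sum>j<n. Dl j) = (\<Sum>j<n. Dl (j + P))" by (rule per_shift_sum[OF Dl_per, symmetric])
  also have "\<dots> = real d * (\<Sum>j<n. Dl j) - (real d - 1)"
    unfolding Dl_rec by (simp add: sum_subtractf sum_distrib_left sum_mfun)
  finally have "(real d - 1) * ((\<Sum>j<n. Dl j) - 1) = 0" by (simp add: algebra_simps)
  thus ?thesis using d2 by simp
qed

lemma Sf_n: "Sf R (j + n) = Sf R j + 1"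
proof (induction j)
  case 0 thus ?case unfolding Sf_def using sum_Dl by simp
next
  case (Suc j)
  have "Sf R (Suc j + n) = Sf R (j + n) + Dl (j + n)" unfolding Sf_def by simp
  also have "Dl (j + n) = Dl j" using Dl_per unfolding per_def by blast
  finally show ?case using Suc unfolding Sf_def by simp
qed

lemma Sf_less: "i < j \<Longrightarrow> Sf R i < Sf R j"
proof (induction j)
  case 0 thus ?case by simp
next
  case (Suc j)
  have "Sf R (Suc j) = Sf R j + Dl j" unfolding Sf_def by simp
  thus ?case using Suc Dl_pos[of j] by (cases "i = j") auto
qed

lemma Lf_gl: "goodlift (Lf R t)"
  unfolding goodlift_def
proof (intro conjI allI)
  fix j
  show "Lf R t j < Lf R t (Suc j)" unfolding Lf_def using Sf_less[of j "Suc j"] by simp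
  show "Lf R t (j + n) = Lf R t j + 1" unfolding Lf_def Sf_n by simp
next
  have s0: "Sf R 0 = 0" unfolding Sf_def by simp
  have sP: "0 < Sf R P" "Sf R P < 1" using Sf_less[of 0 P] Sf_less[of P n] P_pos P_lt Sf_n[of 0] s0 by auto
  have dd: "real d - 1 > 0" using d2 by simp
  show "0 \<le> Lf R t 0" unfolding Lf_def s0 using sP dd by simp
  have "Sf R P + real t < real d - 1" using sP tl d2 by linarith
  thus "Lf R t 0 < 1" unfolding Lf_def s0 using dd by simp
next
  fix j
  show "real d * Lf R t j - Lf R t (j + P) \<in> \<int>"
  proof (induction j)
    case 0
    have dd: "real d - 1 \<noteq> 0" using d2 by simp
    have "real d * Lf R t 0 - Lf R t (0 + P) = (real d * ((Sf R P + real t) / (real d - 1)) - (Sf R P + real t) / (real d - 1)) - Sf R P"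
      unfolding Lf_def by (simp add: Sf_def algebra_simps)
    also have "\<dots> = real t" unfolding x0_aux[OF dd] by simp
    finally have "real d * Lf R t 0 - Lf R t (0 + P) = real t" .
    thus ?case by simp
  next
    case (Suc j)
    have "real d * Lf R t (Suc j) - Lf R t (Suc j + P)
       = (real d * Lf R t j - Lf R t (j + P)) + (real d * Dl j - Dl (j + P))"
      unfolding Lf_def Sf_def by (simp add: algebra_simps)
    also have "real d * Dl j - Dl (j + P) = mfun R j" using Dl_rec by simp
    finally show ?case using Suc by (simp add: mfun_def)
  qed
qed

lemma dl_Lf: "dl (Lf R t) j = Dl j" unfolding dl_def Lf_def Sf_def by simp

lemma mreal_Lf: "mreal (Lf R t) j = mfun R j"
  unfolding mreal_def dl_Lf using Dl_rec by simp

lemma tval_Lf: "tval (Lf R t) = real t"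
proof -
  have dd: "real d - 1 \<noteq> 0" using d2 by simp
  have "tval (Lf R t) = (real d * ((Sf R P + real t) / (real d - 1)) - (Sf R P + real t) / (real d - 1)) - Sf R P"
    unfolding tval_def Lf_def by (simp add: Sf_def algebra_simps)
  also have "\<dots> = real t" unfolding x0_aux[OF dd] by simp
  finally show ?thesis .
qed

end

lemma rows_of_nth: "j < n \<Longrightarrow> rows_of f ! (j mod k) ! (j div k) = f j"
proof -
  assume j: "j < n"
  have r: "j mod k < k" using k1 by simp
  have l: "j div k < q" using j by (intro less_mult_imp_div_less) (simp add: mult.commute)
  have "rows_of f ! (j mod k) ! (j div k) = f (j mod k + k * (j div k))"
    unfolding rows_of_def using r l by simp
  thus ?thesis by simp
qed

lemma sum_rows_of: "real (sum_list (map sum_list (rows_of f))) = (\<Sum>j<n. real (f j))"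
proof -
  have "real (sum_list (map sum_list (rows_of f))) = (\<Sum>r<k. \<Sum>l<q. real (f (r + k * l)))"
    unfolding rows_of_def by (simp add: sum_list_sum_nth atLeast0LessThan of_nat_sum)
  thus ?thesis by (simp add: sum_double)
qed

lemma gl_unique:
  assumes gL: "goodlift L" and gL': "goodlift L'"
    and m: "\<And>j. j < n \<Longrightarrow> mreal L j = mreal L' j" and tv: "tval L = tval L'"
  shows "L = L'"
proof -
  have mm: "mreal L j = mreal L' j" for j
    using per_mod[OF mreal_per[OF gL], of j] per_mod[OF mreal_per[OF gL'], of j] m[of "j mod n"] by simp
  have mm': "mreal L = mreal L'" using mm by (rule ext)
  have dd: "dl L j = dl L' j" for j using dl_eq[OF gL, of j] dl_eq[OF gL', of j] mm' by simp
  have S: "(\<Sum>l<j. dl L l) = (\<Sum>l<j. dl L' l)" for j using dd by simp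
  have t1: "tval L = (real d - 1) * L 0 - (\<Sum>l<P. dl L l)"
    unfolding tval_def using L_rep_gen[of L P] by (simp add: algebra_simps)
  have t2: "tval L' = (real d - 1) * L' 0 - (\<Sum>l<P. dl L' l)"
    unfolding tval_def using L_rep_gen[of L' P] by (simp add: algebra_simps)
  have "(real d - 1) * L 0 = (real d - 1) * L' 0" using t1 t2 tv S[of P] by linarith
  moreover have "real d - 1 \<noteq> 0" using d2 by simp
  ultimately have "L 0 = L' 0" by simp
  show ?thesis
  proof
    fix j show "L j = L' j" using L_rep_gen[of L j] L_rep_gen[of L' j] S[of j] \<open>L 0 = L' 0\<close> by simp
  qed
qed

definition Phi :: "real set \<times> nat \<Rightarrow> nat list list \<times> nat" where
  "Phi Ai = (rows_of (mnat (LA (fst Ai) (snd Ai))), nat \<lfloor>tval (LA (fst Ai) (snd Ai))\<rfloor>)"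
definition Psi :: "nat list list \<times> nat \<Rightarrow> real set \<times> nat" where
  "Psi Rt = (AL (Lf (fst Rt) (snd Rt)), iL (Lf (fst Rt) (snd Rt)))"

abbreviation "XX \<equiv> {A. rotational_set d n P A} \<times> {0..<n}"
abbreviation "YY \<equiv> Fs q k (d - 1) \<times> {0..<d - 1}"

lemma Phi_into: "Phi ` XX \<subseteq> YY"
proof
  fix y assume "y \<in> Phi ` XX"
  then obtain A i where Ai: "rotational_set d n P A" "i < n" "y = Phi (A, i)" by auto
  let ?L = "LA A i"
  have gL: "goodlift ?L" by (rule LA_gl[OF Ai(1,2)])
  have F: "rows_of (mnat ?L) \<in> Fs q k (d - 1)"
    unfolding Fs_def
  proof (intro CollectI conjI ballI)
    show "length (rows_of (mnat ?L)) = k" unfolding rows_of_def by simp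
    fix r assume "r \<in> set (rows_of (mnat ?L))"
    then obtain r0 where r0: "r0 < k" "r = map (\<lambda>l. mnat ?L (r0 + k * l)) [0..<q]"
      unfolding rows_of_def by auto
    show "length r = q" using r0 by simp
    obtain l where l: "l < q" "0 < mnat ?L (r0 + k * l)" using rows_pos[OF gL r0(1)] by blast
    have "mnat ?L (r0 + k * l) \<in> set r" using r0 l by auto
    thus "0 < sum_list r" using l member_le_sum_list by (metis gr0I le_zero_eq)
  next
    have "real (sum_list (map sum_list (rows_of (mnat ?L)))) = (\<Sum>j<n. mreal ?L j)"
      unfolding sum_rows_of using mreal_mnat[OF gL] by simp
    also have "\<dots> = real (d - 1)" using sum_mreal[OF gL] d2 by simp
    finally show "sum_list (map sum_list (rows_of (mnat ?L))) = d - 1" by (simp only: of_nat_eq_iff)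
  qed
  have "tval ?L = real (nat \<lfloor>tval ?L\<rfloor>)" by (rule Ints_nat[OF tval_int[OF gL]]) (use tval_range[OF gL] in simp)
  hence "nat \<lfloor>tval ?L\<rfloor> < d - 1" using tval_range[OF gL] d2 by linarith
  thus "y \<in> YY" using F Ai(3) unfolding Phi_def by simp
qed

lemma Phi_inj: "inj_on Phi XX"
proof (rule inj_onI)
  fix x y assume x: "x \<in> XX" and y: "y \<in> XX" and e: "Phi x = Phi y"
  obtain A i where A: "x = (A, i)" "rotational_set d n P A" "i < n" using x by auto
  obtain A' i' where A': "y = (A', i')" "rotational_set d n P A'" "i' < n" using y by auto
  let ?L = "LA A i" and ?L' = "LA A' i'"
  have gL: "goodlift ?L" by (rule LA_gl[OF A(2,3)])
  have gL': "goodlift ?L'" by (rule LA_gl[OF A'(2,3)])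
  have r: "rows_of (mnat ?L) = rows_of (mnat ?L')" and t: "nat \<lfloor>tval ?L\<rfloor> = nat \<lfloor>tval ?L'\<rfloor>"
    using e A(1) A'(1) unfolding Phi_def by auto
  have "?L = ?L'"
  proof (rule gl_unique[OF gL gL'])
    fix j assume j: "j < n"
    have "mnat ?L j = mnat ?L' j" using rows_of_nth[OF j, of "mnat ?L"] rows_of_nth[OF j, of "mnat ?L'"] r by simp
    thus "mreal ?L j = mreal ?L' j" using mreal_mnat[OF gL] mreal_mnat[OF gL'] by simp
  next
    have "tval ?L = real (nat \<lfloor>tval ?L\<rfloor>)" by (rule Ints_nat[OF tval_int[OF gL]]) (use tval_range[OF gL] in simp)
    moreover have "tval ?L' = real (nat \<lfloor>tval ?L'\<rfloor>)" by (rule Ints_nat[OF tval_int[OF gL']]) (use tval_range[OF gL'] in simp)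
    ultimately show "tval ?L = tval ?L'" using t by simp
  qed
  hence "A = A'" "i = i'" using LA_AL'[OF A(2,3)] LA_AL'[OF A'(2,3)] LA_iL[OF A(2,3)] LA_iL[OF A'(2,3)] by metis+
  thus "x = y" using A A' by simp
qed

lemma Psi_into: "Psi ` YY \<subseteq> XX"
proof
  fix x assume "x \<in> Psi ` YY"
  then obtain R t where Rt: "R \<in> Fs q k (d - 1)" "t < d - 1" "x = Psi (R, t)" by auto
  have gL: "goodlift (Lf R t)" by (rule Lf_gl[OF Rt(1,2)])
  show "x \<in> XX" using Rt(3) AL_rot[OF gL] iL_lt[OF gL] unfolding Psi_def by simp
qed

lemma Psi_inj: "inj_on Psi YY"
proof (rule inj_onI)
  fix x y assume x: "x \<in> YY" and y: "y \<in> YY" and e: "Psi x = Psi y"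
  obtain R t where R: "x = (R, t)" "R \<in> Fs q k (d - 1)" "t < d - 1" using x by auto
  obtain R' t' where R': "y = (R', t')" "R' \<in> Fs q k (d - 1)" "t' < d - 1" using y by auto
  let ?L = "Lf R t" and ?L' = "Lf R' t'"
  have gL: "goodlift ?L" by (rule Lf_gl[OF R(2,3)])
  have gL': "goodlift ?L'" by (rule Lf_gl[OF R'(2,3)])
  have eqs: "AL ?L = AL ?L'" "iL ?L = iL ?L'" using e R(1) R'(1) unfolding Psi_def by auto
  have LL: "?L = ?L'"
  proof
    fix j
    have "?L j = LA (AL ?L) (iL ?L) j" using LA_AL[OF gL] by simp
    also have "\<dots> = LA (AL ?L') (iL ?L') j" using eqs by simp
    also have "\<dots> = ?L' j" using LA_AL[OF gL'] by simp
    finally show "?L j = ?L' j" .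
  qed
  have mf: "mfun R j = mfun R' j" for j using mreal_Lf[OF R(2,3), of j] mreal_Lf[OF R'(2,3), of j] LL by simp
  have "R = R'"
  proof (rule nth_equalityI)
    show "length R = length R'" using R_len[OF R(2,3)] R_len[OF R'(2,3)] by simp
    fix r assume "r < length R"
    hence r: "r < k" using R_len[OF R(2,3)] by simp
    show "R ! r = R' ! r"
    proof (rule nth_equalityI)
      show "length (R ! r) = length (R' ! r)" using R_row[OF R(2,3) r] R_row[OF R'(2,3) r] by simp
      fix l assume "l < length (R ! r)"
      hence l: "l < q" using R_row[OF R(2,3) r] by simp
      show "R ! r ! l = R' ! r ! l" using mfun_at[OF R(2,3) r l] mfun_at[OF R'(2,3) r l] mf by simp
    qed
  qed
  moreover have "t = t'" using tval_Lf[OF R(2,3)] tval_Lf[OF R'(2,3)] LL by simp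
  ultimately show "x = y" using R R' by simp
qed

lemma key_count: "n * card {A. rotational_set d n P A} = (d - 1) * card (Fs q k (d - 1))"
proof -
  have fY: "finite YY" using finite_Fs by simp
  have fX: "finite XX"
    using finite_subset[OF Phi_into fY] Phi_inj by (rule finite_imageD)
  have "card XX \<le> card YY" by (rule card_inj_on_le[OF Phi_inj Phi_into fY])
  moreover have "card YY \<le> card XX" by (rule card_inj_on_le[OF Psi_inj Psi_into fX])
  ultimately have "card XX = card YY" by simp
  thus ?thesis by (simp add: card_cartesian_product mult.commute)
qed

end


lemma key:
  fixes d q p k :: nat
  assumes "d \<ge> 2" and "q \<ge> 2" and "1 \<le> p" and "p \<le> q - 1" and "coprime p q" and "1 \<le> k"
  shows "k * q * Nrot d p q k = (d - 1) * card (Fs q k (d - 1))"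
proof -
  interpret RS d q p k using assms by unfold_locales auto
  show ?thesis unfolding Nrot_def using key_count by simp
qed

lemma sum_identity:
  fixes d q p k :: nat
  assumes "d \<ge> 2" and "q \<ge> 2" and "1 \<le> p" and "p \<le> q - 1" and "coprime p q" and "1 \<le> k"
  shows "(\<Sum>j=1..k. ((k - 1) choose (j - 1)) * Nrot d p q j) = (d - 2 + k * q) choose (d - 2)"
proof -
  have F0: "card (Fs q 0 (d-1)) = 0"
  proof -
    have "Fs q 0 (d-1) = {}" unfolding Fs_def using assms(1) by auto
    thus ?thesis by simp
  qed
  have "k * q * (\<Sum>j=1..k. ((k - 1) choose (j - 1)) * Nrot d p q j)
      = (\<Sum>j=1..k. (k choose j) * (j * q * Nrot d p q j))"
    unfolding sum_distrib_left
  proof (rule sum.cong[OF refl])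
    fix j assume j: "j \<in> {1..k}"
    have "j * (k choose j) = k * ((k - 1) choose (j - 1))"
    proof -
      obtain j' where "j = Suc j'" using j by (cases j) auto
      thus ?thesis using binomial_absorption[of j' k] by simp
    qed
    thus "k * q * ((k - 1 choose (j - 1)) * Nrot d p q j) = (k choose j) * (j * q * Nrot d p q j)"
      by (metis (no_types, lifting) mult.assoc mult.left_commute)
  qed
  also have "\<dots> = (\<Sum>j=1..k. (k choose j) * ((d - 1) * card (Fs q j (d - 1))))"
    by (rule sum.cong[OF refl]) (use key[OF assms(1-5)] in auto)
  also have "\<dots> = (d - 1) * (\<Sum>j\<le>k. (k choose j) * card (Fs q j (d - 1)))"
  proof -
    have "(\<Sum>j\<le>k. (k choose j) * card (Fs q j (d - 1))) = (\<Sum>j=1..k. (k choose j) * card (Fs q j (d - 1)))"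
      using F0 by (simp add: atMost_atLeast0 sum.atLeast_Suc_atMost)
    thus ?thesis by (simp add: sum_distrib_left algebra_simps)
  qed
  also have "\<dots> = (d - 1) * ((d - 1 + k * q - 1) choose (d - 1))"
    using Gs_split[of q k "d-1"] card_Gs[of q k "d-1"] by simp
  also have "\<dots> = k * q * ((d - 2 + k * q) choose (d - 2))"
  proof -
    obtain e where de: "d = Suc (Suc e)" using assms(1) by (metis add_2_eq_Suc le_Suc_ex)
    let ?n = "e + k * q"
    have "Suc e * (?n choose Suc e) = ?n * ((?n - 1) choose e)"
      by (rule binomial_absorption)
    also have "\<dots> = (?n - e) * (?n choose e)"
      using binomial_absorb_comp[of ?n e] by simp
    finally show ?thesis using de by (simp add: mult.commute)
  qed
  finally show ?thesis using assms by simp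
qed

theorem theorem3p6:
  fixes d q p :: nat
  assumes "d \<ge> 2" and "q \<ge> 2" and "1 \<le> p" and "p \<le> q - 1" and "coprime p q"
  shows "Nrot d p q 1 = (d - 2 + q) choose (d - 2)
    \<and> (\<forall>k. 2 \<le> k \<and> k \<le> d - 1 \<longrightarrow>
        int (Nrot d p q k) = int ((d - 2 + k * q) choose (d - 2))
          - (\<Sum>j = 1..k - 1. int ((k - 1) choose (j - 1)) * int (Nrot d p q j)))"
proof
  show "Nrot d p q 1 = (d - 2 + q) choose (d - 2)"
    using sum_identity[OF assms, of 1] by simp
  show "\<forall>k. 2 \<le> k \<and> k \<le> d - 1 \<longrightarrow>
        int (Nrot d p q k) = int ((d - 2 + k * q) choose (d - 2))
          - (\<Sum>j = 1..k - 1. int ((k - 1) choose (j - 1)) * int (Nrot d p q j))"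
  proof (intro allI impI)
    fix k assume k: "2 \<le> k \<and> k \<le> d - 1"
    have "(\<Sum>j=1..k. ((k - 1) choose (j - 1)) * Nrot d p q j) = (d - 2 + k * q) choose (d - 2)"
      using sum_identity[OF assms, of k] k by simp
    moreover have "(\<Sum>j=1..k. ((k - 1) choose (j - 1)) * Nrot d p q j)
       = (\<Sum>j=1..k-1. ((k - 1) choose (j - 1)) * Nrot d p q j) + Nrot d p q k"
      using k by (cases k) (auto simp: sum.atLeast_Suc_atMost_Suc_shift)
    ultimately have "int (\<Sum>j=1..k-1. ((k - 1) choose (j - 1)) * Nrot d p q j) + int (Nrot d p q k) = int ((d - 2 + k * q) choose (d - 2))"
      by (metis of_nat_add)
    thus "int (Nrot d p q k) = int ((d - 2 + k * q) choose (d - 2))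
          - (\<Sum>j = 1..k - 1. int ((k - 1) choose (j - 1)) * int (Nrot d p q j))"
      by (simp add: of_nat_sum)
  qed
qed
end
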